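(* Let $\beta\in\mathbb{F}_{p^m}\setminus\{0\}$. The isodual $(\alpha+\beta u)$-constacyclic codes of length $4p^s$ over $R$ are exactly the codes $$\left\langle\left(x^2+\gamma x+\tfrac{\gamma^2}{2}\right)^i\left(x^2-\gamma x+\tfrac{\gamma^2}{2}\right)^{2p^s-i}\right\rangle,\qquad 0\le i\le 2p^s,$$ (ideals of $R[x]/\langle x^{4p^s}-(\alpha+\beta u)\rangle$).
   Context: Let $p$ be an odd prime and $m,s$ positive integers with $p^m\equiv 3\pmod 4$; $\mathbb{F}_{p^m}$ is the field with $p^m$ elements and $R=\mathbb{F}_{p^m}[u]/\langle u^2\rangle$. Fix $\alpha\in\mathbb{F}_{p^m}\setminus\{0\}$ that is not a square in $\mathbb{F}_{p^m}$, let $\alpha_0\in\mathbb{F}_{p^m}$ satisfy $\alpha_0^{p^s}=\alpha$, and let $\gamma\in\mathbb{F}_{p^m}$ satisfy $\gamma^4+4\alpha_0=0$. A $\lambda$-constacyclic code of length $n$ over $R$ ($\lambda$ a unit) is an $R$-submodule of $R^n$ closed under $(c_0,\dots,c_{n-1})\mapsto(\lambda c_{n-1},c_0,\dots,c_{n-2})$, identified with an ideal of $R[x]/\langle x^n-\lambda\rangle$. Its dual $\mathcal{C}^\perp$ is taken w.r.t. the standard inner product $a\cdot c=\sum a_kc_k$. A code $\mathcal{C}$ is isodual if there is a monomial map $T(c_0,\dots,c_{n-1})=(u_0c_{\sigma(0)},\dots,u_{n-1}c_{\sigma(n-1)})$ ($\sigma$ a permutation of $\{0,\dots,n-1\}$,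 $u_k$ units of $R$) with $T(\mathcal{C})=\mathcal{C}^\perp$. *)

theory Defs
  imports "HOL-Computational_Algebra.Polynomial" "HOL-Combinatorics.Permutations"
begin

text \<open>An element DN a b represents a + b u with u^2 = 0.\<close>

datatype 'a dnum = DN (re: 'a) (ep: 'a)

instantiation dnum :: (comm_ring_1) comm_ring_1
begin

definition zero_dnum :: "'a dnum" where "zero_dnum = DN 0 0"
definition one_dnum :: "'a dnum" where "one_dnum = DN 1 0"
definition plus_dnum :: "'a dnum \<Rightarrow> 'a dnum \<Rightarrow> 'a dnum"
  where "plus_dnum x y = DN (re x + re y) (ep x + ep y)"
definition minus_dnum :: "'a dnum \<Rightarrow> 'a dnum \<Rightarrow> 'a dnum"
  where "minus_dnum x y = DN (re x - re y) (ep x - ep y)"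
definition uminus_dnum :: "'a dnum \<Rightarrow> 'a dnum"
  where "uminus_dnum x = DN (- re x) (- ep x)"
definition times_dnum :: "'a dnum \<Rightarrow> 'a dnum \<Rightarrow> 'a dnum"
  where "times_dnum x y = DN (re x * re y) (re x * ep y + ep x * re y)"

instance
  by standard (auto simp: zero_dnum_def one_dnum_def plus_dnum_def minus_dnum_def
      uminus_dnum_def times_dnum_def algebra_simps intro: dnum.expand)

end

definition u_dn :: "'a::comm_ring_1 dnum" where "u_dn = DN 0 1"
definition emb :: "'a::comm_ring_1 \<Rightarrow> 'a dnum" where "emb a = DN a 0"

definition linear_code :: "nat \<Rightarrow> 'r::comm_ring_1 list set \<Rightarrow> bool" where
  "linear_code n C \<longleftrightarrow> (\<forall>c\<in>C. length c = n) \<and> replicate n 0 \<in> C \<and>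
     (\<forall>a\<in>C. \<forall>b\<in>C. map2 (+) a b \<in> C) \<and> (\<forall>r. \<forall>a\<in>C. map ((*) r) a \<in> C)"

definition const_shift :: "'r::comm_ring_1 \<Rightarrow> 'r list \<Rightarrow> 'r list" where
  "const_shift lam c = (lam * last c) # butlast c"

definition constacyclic_code :: "nat \<Rightarrow> 'r::comm_ring_1 \<Rightarrow> 'r list set \<Rightarrow> bool" where
  "constacyclic_code n lam C \<longleftrightarrow> linear_code n C \<and> (\<forall>c\<in>C. const_shift lam c \<in> C)"

definition inner :: "'r::comm_ring_1 list \<Rightarrow> 'r list \<Rightarrow> 'r" where
  "inner a c = sum_list (map2 (*) a c)"

definition dual_code :: "nat \<Rightarrow> 'r::comm_ring_1 list set \<Rightarrow> 'r list set" where
  "dual_code n C = {a. length a = n \<and> (\<forall>c\<in>C. inner a c = 0)}"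

definition monomial_map :: "nat \<Rightarrow> (nat \<Rightarrow> nat) \<Rightarrow> (nat \<Rightarrow> 'r::comm_ring_1) \<Rightarrow> 'r list \<Rightarrow> 'r list" where
  "monomial_map n \<sigma> w c = map (\<lambda>k. w k * c ! \<sigma> k) [0..<n]"

definition isodual :: "nat \<Rightarrow> 'r::comm_ring_1 list set \<Rightarrow> bool" where
  "isodual n C \<longleftrightarrow> (\<exists>\<sigma> w. \<sigma> permutes {..<n} \<and> (\<forall>k<n. w k dvd 1) \<and>
      monomial_map n \<sigma> w ` C = dual_code n C)"

text \<open>The ideal generated by g in R[x]/<x^n - lambda>, with residues identified with their
  coefficient vectors of length n.\<close>
definition principal_ideal_code :: "nat \<Rightarrow> 'r::comm_ring_1 \<Rightarrow> 'r poly \<Rightarrow> 'r list set" where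
  "principal_ideal_code n lam g =
     {c. length c = n \<and> (\<exists>f q. Poly c = f * g + q * (monom 1 n - [:lam:]))}"

end

theory Submission
  imports Defs "HOL-Algebra.Coset" "HOL-Number_Theory.Cong" "HOL-Computational_Algebra.Polynomial_Factorial"
begin



lemma re_add[simp]: "re (x + y) = re x + re y" by (simp add: plus_dnum_def)
lemma ep_add[simp]: "ep (x + y) = ep x + ep y" by (simp add: plus_dnum_def)
lemma re_diff[simp]: "re (x - y) = re x - re y" by (simp add: minus_dnum_def)
lemma ep_diff[simp]: "ep (x - y) = ep x - ep y" by (simp add: minus_dnum_def)
lemma re_uminus[simp]: "re (- x) = - re x" by (simp add: uminus_dnum_def)
lemma ep_uminus[simp]: "ep (- x) = - ep x" by (simp add: uminus_dnum_def)
lemma re_mult[simp]: "re (x * y) = re x * re y" by (simp add: times_dnum_def)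
lemma ep_mult[simp]: "ep (x * y) = re x * ep y + ep x * re y" by (simp add: times_dnum_def)
lemma re_zero[simp]: "re 0 = 0" by (simp add: zero_dnum_def)
lemma ep_zero[simp]: "ep 0 = 0" by (simp add: zero_dnum_def)
lemma re_one[simp]: "re 1 = 1" by (simp add: one_dnum_def)
lemma ep_one[simp]: "ep 1 = 0" by (simp add: one_dnum_def)
lemma re_emb[simp]: "re (emb a) = a" by (simp add: emb_def)
lemma ep_emb[simp]: "ep (emb a) = 0" by (simp add: emb_def)
lemma emb_0[simp]: "emb 0 = 0" by (simp add: emb_def zero_dnum_def)

lemma re_sum: "re (sum f A) = sum (\<lambda>x. re (f x)) A"
  by (induction A rule: infinite_finite_induct) auto
lemma ep_sum: "ep (sum f A) = sum (\<lambda>x. ep (f x)) A"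
  by (induction A rule: infinite_finite_induct) auto

lemma dnum_eqI: "re x = re y \<Longrightarrow> ep x = ep y \<Longrightarrow> x = y"
  by (cases x; cases y) auto

locale dn =
  fixes n :: nat and \<alpha> \<beta> :: "'a::field"
  assumes n_pos: "n > 0" and beta_nz: "\<beta> \<noteq> 0"
begin

definition E :: "'a poly" where "E = monom 1 n - [:\<alpha>:]"
definition H :: "'a poly" where "H = E ^ 2"
definition Rp :: "'a dnum poly \<Rightarrow> 'a poly" where "Rp P = map_poly re P"
definition Up :: "'a dnum poly \<Rightarrow> 'a poly" where "Up P = map_poly ep P"
definition psi :: "'a dnum poly \<Rightarrow> 'a poly" where
  "psi P = Rp P + smult (inverse \<beta>) (E * Up P)"
definition Phi :: "'a dnum list \<Rightarrow> 'a poly" where "Phi c = psi (Poly c)"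
definition D :: "'a poly \<Rightarrow> 'a dnum list set" where
  "D G = {c. length c = n \<and> G dvd Phi c}"
definition Elam :: "'a dnum poly" where "Elam = monom 1 n - [:DN \<alpha> \<beta>:]"

lemma coeff_Rp[simp]: "coeff (Rp P) k = re (coeff P k)"
  by (simp add: Rp_def coeff_map_poly)
lemma coeff_Up[simp]: "coeff (Up P) k = ep (coeff P k)"
  by (simp add: Up_def coeff_map_poly)

lemma Rp_add[simp]: "Rp (P + Q) = Rp P + Rp Q" by (rule poly_eqI) simp
lemma Up_add[simp]: "Up (P + Q) = Up P + Up Q" by (rule poly_eqI) simp
lemma Rp_diff[simp]: "Rp (P - Q) = Rp P - Rp Q" by (rule poly_eqI) simp
lemma Up_diff[simp]: "Up (P - Q) = Up P - Up Q" by (rule poly_eqI) simp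
lemma Rp_0[simp]: "Rp 0 = 0" by (rule poly_eqI) simp
lemma Up_0[simp]: "Up 0 = 0" by (rule poly_eqI) simp

lemma Rp_mult[simp]: "Rp (P * Q) = Rp P * Rp Q"
  by (rule poly_eqI) (simp add: coeff_mult re_sum)
lemma Up_mult: "Up (P * Q) = Rp P * Up Q + Up P * Rp Q"
  by (rule poly_eqI) (simp add: coeff_mult ep_sum sum.distrib)

lemma psi_add[simp]: "psi (P + Q) = psi P + psi Q"
  by (simp add: psi_def algebra_simps smult_add_right)
lemma psi_diff[simp]: "psi (P - Q) = psi P - psi Q"
  by (simp add: psi_def algebra_simps smult_diff_right)
lemma psi_0[simp]: "psi 0 = 0" by (simp add: psi_def)

lemma psi_mult: "H dvd (psi (P * Q) - psi P * psi Q)"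
proof -
  have "psi (P * Q) - psi P * psi Q = H * (- (smult (inverse \<beta> * inverse \<beta>) (Up P * Up Q)))"
    by (simp add: psi_def Up_mult H_def power2_eq_square algebra_simps smult_add_right)
  then show ?thesis by (metis dvd_triv_left)
qed

lemma degree_E: "degree E = n"
  using n_pos unfolding E_def diff_conv_add_uminus
  by (subst degree_add_eq_left) (auto simp: degree_monom_eq)
lemma E_nz: "E \<noteq> 0" using degree_E n_pos by (metis degree_0 less_irrefl)
lemma H_nz: "H \<noteq> 0" using E_nz by (simp add: H_def)
lemma degree_H: "degree H = 2 * n"
  using degree_E by (simp add: H_def degree_power_eq E_nz)

lemma Rp_Elam: "Rp Elam = E"
  by (rule poly_eqI) (simp add: Elam_def E_def coeff_monom coeff_pCons split: nat.splits)
lemma Up_Elam: "Up Elam = - [:\<beta>:]"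
  by (rule poly_eqI) (simp add: Elam_def coeff_monom coeff_pCons split: nat.splits)
lemma psi_Elam[simp]: "psi Elam = 0"
  using beta_nz by (simp add: psi_def Rp_Elam Up_Elam)

lemma psi_emb[simp]: "psi (map_poly emb f) = f"
proof -
  have "Rp (map_poly emb f) = f" by (rule poly_eqI) (simp add: coeff_map_poly)
  moreover have "Up (map_poly emb f) = 0" by (rule poly_eqI) (simp add: coeff_map_poly)
  ultimately show ?thesis by (simp add: psi_def)
qed

end


lemma deg_lt_iff: "0 < m \<Longrightarrow> degree P < m \<longleftrightarrow> (\<forall>k\<ge>m. coeff P k = 0)"
proof
  assume "0 < m" "degree P < m" then show "\<forall>k\<ge>m. coeff P k = 0"
    by (auto intro: coeff_eq_0)
next
  assume "0 < m" "\<forall>k\<ge>m. coeff P k = 0"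
  then have "degree P \<le> m - 1" by (intro degree_le) auto
  with \<open>0 < m\<close> show "degree P < m" by linarith
qed

lemma Poly_map_coeff: "degree r < m \<Longrightarrow> Poly (map (coeff r) [0..<m]) = r"
  by (rule poly_eqI) (auto simp: nth_default_def coeff_eq_0)

lemma degree_Poly_less: "length c = m \<Longrightarrow> 0 < m \<Longrightarrow> degree (Poly c) < m"
  by (subst deg_lt_iff) (auto simp: nth_default_def)

context dn begin

lemma monom_Elam_coeff:
  "coeff (monom a j * Elam) k = (if k = j + n then a else 0) - (if k = j then a * DN \<alpha> \<beta> else 0)"
proof -
  have "monom a j * Elam = monom a (j + n) - monom (a * DN \<alpha> \<beta>) j"
    by (simp add: Elam_def right_diff_distrib mult_monom monom_0[symmetric] del: monom_0)
  then show ?thesis by (simp add: coeff_monom)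
qed

lemma div_Elam: "\<exists>q r. P = q * Elam + r \<and> degree r < n"
proof (induction "degree P" arbitrary: P rule: less_induct)
  case less
  show ?case
  proof (cases "degree P < n")
    case True then show ?thesis by (intro exI[of _ 0] exI[of _ P]) auto
  next
    case False
    define d where "d = degree P"
    define a where "a = lead_coeff P"
    define P' where "P' = P - monom a (d - n) * Elam"
    have dn: "d \<ge> n" using False d_def by simp
    have "\<forall>k\<ge>d. coeff P' k = 0"
    proof (intro allI impI)
      fix k assume "d \<le> k"
      show "coeff P' k = 0"
      proof (cases "k = d")
        case True
        then show ?thesis using dn n_pos
          by (simp add: P'_def monom_Elam_coeff a_def d_def)
      next
        case False
        then have "k > d" using \<open>d \<le> k\<close> by simp
        then have "coeff P k = 0" by (simp add: d_def coeff_eq_0)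
        then show ?thesis using \<open>k > d\<close> dn n_pos
          by (simp add: P'_def monom_Elam_coeff)
      qed
    qed
    then have "degree P' < d" using dn n_pos by (subst deg_lt_iff) auto
    then obtain q r where qr: "P' = q * Elam + r" "degree r < n"
      using less d_def by blast
    show ?thesis
      by (intro exI[of _ "q + monom a (d - n)"] exI[of _ r])
         (use qr in \<open>auto simp: P'_def algebra_simps\<close>)
  qed
qed

lemma psi_Elam_dvd: assumes "Elam dvd X" shows "H dvd psi X"
proof -
  obtain q where X: "X = q * Elam" using assms by (auto elim!: dvdE simp: mult.commute)
  have "H dvd psi (q * Elam) - psi q * psi Elam" by (rule psi_mult)
  then show ?thesis by (simp add: X)
qed

lemma psi_cong_mult:
  assumes "H dvd psi A - a" "H dvd psi B - b" shows "H dvd psi (A * B) - a * b"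
proof -
  have "psi (A * B) - a * b = (psi (A * B) - psi A * psi B) + (psi A - a) * psi B + a * (psi B - b)"
    by (simp add: algebra_simps)
  then show ?thesis using assms psi_mult by (metis dvd_add dvd_mult2 dvd_mult)
qed

lemma degree_Rp_less: "degree r < n \<Longrightarrow> degree (Rp r) < n"
  using n_pos by (auto simp: deg_lt_iff)
lemma degree_Up_less: "degree r < n \<Longrightarrow> degree (Up r) < n"
  using n_pos by (auto simp: deg_lt_iff)

lemma degree_psi_less: assumes "degree r < n" shows "degree (psi r) < 2 * n"
proof -
  have a: "degree (Rp r) < 2 * n" using degree_Rp_less[OF assms] by simp
  have "degree (E * Up r) \<le> n + degree (Up r)"
    using degree_mult_le[of E "Up r"] degree_E by simp
  then have "degree (smult (inverse \<beta>) (E * Up r)) < 2 * n"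
    using degree_Up_less[OF assms] degree_smult_le[of "inverse \<beta>" "E * Up r"] by linarith
  with a show ?thesis unfolding psi_def
    using le_less_trans[OF degree_add_le_max] max_less_iff_conj by blast
qed

lemma psi_low_zero: assumes "degree r < n" "psi r = 0" shows "r = 0"
proof -
  have U: "Up r = 0"
  proof (rule ccontr)
    assume "Up r \<noteq> 0"
    then have "degree (smult (inverse \<beta>) (E * Up r)) = n + degree (Up r)"
      using beta_nz E_nz degree_E by (simp add: degree_mult_eq)
    then have "degree (psi r) = n + degree (Up r)"
      unfolding psi_def using degree_Rp_less[OF assms(1)]
      by (subst degree_add_eq_right) auto
    then show False using assms(2) n_pos by simp
  qed
  then have "Rp r = 0" using assms(2) by (simp add: psi_def)
  with U show ?thesis
    by (intro poly_eqI dnum_eqI) (metis coeff_Rp coeff_Up coeff_0 re_zero ep_zero)+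
qed

lemma kernel: assumes "H dvd psi P" shows "Elam dvd P"
proof -
  obtain q r where qr: "P = q * Elam + r" "degree r < n" using div_Elam by blast
  have "H dvd psi (q * Elam)" by (rule psi_Elam_dvd) simp
  then have "H dvd psi r" using assms qr(1) by (metis add_diff_cancel_left' dvd_diff psi_add)
  moreover have "degree (psi r) < degree H" using degree_psi_less[OF qr(2)] degree_H by simp
  ultimately have "psi r = 0" by (metis dvd_imp_degree_le leD)
  then have "r = 0" using psi_low_zero qr(2) by blast
  with qr show ?thesis by simp
qed

lemma Phi_deg: "length c = n \<Longrightarrow> degree (Phi c) < 2 * n"
  unfolding Phi_def using degree_psi_less degree_Poly_less n_pos by blast

lemma Poly_eq_len: assumes "length c = length d" "Poly c = Poly d" shows "c = d"
proof (rule nth_equalityI)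
  fix k assume "k < length c"
  have "coeff (Poly c) k = coeff (Poly d) k" by (simp only: assms(2))
  then show "c ! k = d ! k" using \<open>k < length c\<close> assms(1)
    by (simp add: nth_default_def)
qed (use assms in simp)

lemma Phi_inj: assumes "length c = n" "length d = n" "Phi c = Phi d" shows "c = d"
proof -
  have "degree (Poly c - Poly d) < n"
    using degree_Poly_less[OF assms(1) n_pos] degree_Poly_less[OF assms(2) n_pos]
    by (intro degree_diff_less) auto
  moreover have "psi (Poly c - Poly d) = 0" using assms(3) by (simp add: Phi_def)
  ultimately have "Poly c = Poly d" using psi_low_zero by fastforce
  then show ?thesis using assms Poly_eq_len by (metis)
qed

lemma Phi_surj: assumes "degree P < 2 * n" shows "\<exists>c. length c = n \<and> Phi c = P"
proof -
  define a where "a = P mod E"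
  define b where "b = P div E"
  have P: "P = a + E * b" by (simp add: a_def b_def)
  have da: "degree a < n" using degree_mod_less[OF E_nz, of P] degree_E n_pos
    by (auto simp: a_def)
  have db: "degree b < n"
  proof (cases "b = 0")
    case False
    then have "degree P = n + degree b"
      using P da degree_E E_nz by (metis degree_add_eq_right degree_mult_eq le_add1 order.strict_trans2)
    then show ?thesis using assms by simp
  qed (use n_pos in simp)
  define c where "c = map (\<lambda>k. DN (coeff a k) (\<beta> * coeff b k)) [0..<n]"
  have cR: "Rp (Poly c) = a"
    by (rule poly_eqI) (use da in \<open>auto simp: c_def nth_default_def coeff_eq_0\<close>)
  have cU: "Up (Poly c) = smult \<beta> b"
    by (rule poly_eqI) (use db in \<open>auto simp: c_def nth_default_def coeff_eq_0\<close>)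
  have "Phi c = P" using beta_nz by (simp add: Phi_def psi_def cR cU P)
  then show ?thesis by (intro exI[of _ c]) (simp add: c_def)
qed

lemma red: "\<exists>c. length c = n \<and> Elam dvd (Q - Poly c)"
proof -
  obtain q r where qr: "Q = q * Elam + r" "degree r < n" using div_Elam by blast
  show ?thesis
    by (intro exI[of _ "map (coeff r) [0..<n]"]) (simp add: Poly_map_coeff qr)
qed

end


lemma Poly_map2_add: "length a = length b \<Longrightarrow> Poly (map2 (+) a b) = Poly a + Poly b"
proof (induction a arbitrary: b)
  case (Cons x a) then show ?case by (cases b) auto
qed simp

lemma Poly_map_mult: "Poly (map ((*) r) a) = [:r:] * Poly a"
  by (induction a) (auto simp: mult.commute)

lemma map_poly_emb_pCons[simp]: "map_poly emb (pCons a p) = pCons (emb a) (map_poly emb p)"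
  by (simp add: map_poly_pCons)

lemma emb_1[simp]: "emb 1 = 1" by (simp add: emb_def one_dnum_def)

lemma Poly_replicate0[simp]: "Poly (replicate k 0) = 0"
  by (induction k) auto

lemma Poly_shift:
  assumes "length c = n" "n > 0"
  shows "Poly (const_shift lam c) = [:0, 1:] * Poly c - [:last c:] * (monom 1 n - [:lam:])"
proof -
  have c: "c = butlast c @ [last c]" using assms by (metis append_butlast_last_id length_0_conv less_not_refl)
  have lb: "length (butlast c) = n - 1" using assms by simp
  have "Poly (butlast c @ [last c]) = Poly (butlast c) + monom 1 (n - 1) * [:last c:]"
    using assms(1) by (simp add: Poly_append)
  also have "monom 1 (n - 1) * [:last c:] = monom (last c) (n - 1)"
    by (simp add: mult.commute smult_monom)
  finally have e1: "Poly c = Poly (butlast c) + monom (last c) (n - 1)" by (simp only: c[symmetric])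
  have "[:0, 1:] * Poly c = [:0, 1:] * Poly (butlast c) + [:0, 1:] * monom (last c) (n - 1)"
    unfolding e1 by (rule distrib_left)
  then have "[:0, 1:] * Poly c = pCons 0 (Poly (butlast c)) + pCons 0 (monom (last c) (n - 1))"
    by simp
  moreover have "pCons 0 (monom (last c) (n - 1)) = monom (last c) n"
    using assms(2) by (cases n) (simp_all add: monom_Suc)
  ultimately have "[:0, 1:] * Poly c = pCons 0 (Poly (butlast c)) + monom (last c) n" by (simp only:)
  moreover have "[:last c:] * (monom 1 n - [:lam:]) = monom (last c) n - [:last c * lam:]"
    by (simp add: right_diff_distrib smult_monom)
  ultimately have "[:0, 1:] * Poly c - [:last c:] * (monom 1 n - [:lam:]) =
      pCons 0 (Poly (butlast c)) + [:last c * lam:]" by simp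
  also have "\<dots> = pCons (lam * last c) (Poly (butlast c))" by (simp add: mult.commute)
  finally show ?thesis by (simp add: const_shift_def)
qed

context dn begin

lemma dvd_diff_trans: "(h::'b::comm_ring_1) dvd A - B \<Longrightarrow> h dvd B - C \<Longrightarrow> h dvd A - C"
proof -
  assume "h dvd A - B" "h dvd B - C"
  then have "h dvd (A - B) + (B - C)" by (rule dvd_add)
  then show ?thesis by simp
qed

lemma dvd_diff_sym: "(h::'b::comm_ring_1) dvd A - B \<Longrightarrow> h dvd B - A"
  by (metis dvd_minus_iff minus_diff_eq)

lemma dvd_via_H: assumes "G dvd H" "H dvd X - Y" "G dvd Y" shows "G dvd X"
proof -
  have "G dvd X - Y" using assms(1,2) by (rule dvd_trans)
  then have "G dvd (X - Y) + Y" using assms(3) by (rule dvd_add)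
  then show ?thesis by simp
qed

lemma psi_const_emb: "psi [:emb a:] = [:a:]"
  using psi_emb[of "[:a:]"] by simp

lemma Phi_add: "length a = length b \<Longrightarrow> Phi (map2 (+) a b) = Phi a + Phi b"
  by (simp add: Phi_def Poly_map2_add)

lemma Phi_scal: "H dvd Phi (map ((*) r) c) - psi [:r:] * Phi c"
  unfolding Phi_def Poly_map_mult by (rule psi_mult)

lemma Phi_shift: assumes "length c = n"
  shows "H dvd Phi (const_shift (DN \<alpha> \<beta>) c) - [:0, 1:] * Phi c"
proof -
  have "Phi (const_shift (DN \<alpha> \<beta>) c) = psi ([:0, 1:] * Poly c) - psi ([:last c:] * Elam)"
    unfolding Phi_def using assms n_pos by (simp add: Poly_shift Elam_def)
  moreover have "H dvd psi ([:last c:] * Elam)" by (rule psi_Elam_dvd) (simp add: dvd_smult)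
  moreover have "H dvd psi ([:0, 1:] * Poly c) - psi [:0, 1:] * Phi c"
    unfolding Phi_def by (rule psi_mult)
  moreover have "psi [:0, 1:] = [:0, 1:]"
    using psi_emb[of "[:0, 1:]"] by simp
  ultimately have "H dvd Phi (const_shift (DN \<alpha> \<beta>) c) - (psi ([:0, 1:] * Poly c) - 0)"
    by (simp add: diff_diff_eq2)
  then have "H dvd Phi (const_shift (DN \<alpha> \<beta>) c) - psi ([:0, 1:] * Poly c)" by simp
  then show ?thesis using dvd_diff_trans \<open>H dvd psi ([:0, 1:] * Poly c) - psi [:0, 1:] * Phi c\<close>
    \<open>psi [:0, 1:] = [:0, 1:]\<close> by metis
qed

lemma length_shift: "length c = n \<Longrightarrow> length (const_shift l c) = n"
  using n_pos by (simp add: const_shift_def)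

lemma D_constacyclic: assumes "G dvd H" shows "constacyclic_code n (DN \<alpha> \<beta>) (D G)"
  unfolding constacyclic_code_def linear_code_def
proof (intro conjI ballI allI)
  show "replicate n 0 \<in> D G" by (simp add: D_def Phi_def)
next
  fix a b assume "a \<in> D G" "b \<in> D G"
  then show "map2 (+) a b \<in> D G" by (simp add: D_def Phi_add)
next
  fix r a assume a: "a \<in> D G"
  have "G dvd psi [:r:] * Phi a" using a by (simp add: D_def)
  then show "map ((*) r) a \<in> D G" using a dvd_via_H[OF assms Phi_scal] by (simp add: D_def)
next
  fix c assume c: "c \<in> D G"
  have lc: "length c = n" using c by (simp add: D_def)
  have "G dvd [:0, 1:] * Phi c" using c unfolding D_def by (metis (mono_tags) mem_Collect_eq dvd_mult)
  then have "G dvd Phi (const_shift (DN \<alpha> \<beta>) c)" by (rule dvd_via_H[OF assms Phi_shift[OF lc]])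
  then show "const_shift (DN \<alpha> \<beta>) c \<in> D G"
    using length_shift[OF lc] by (simp add: D_def)
qed (simp add: D_def)

lemma classify:
  assumes C: "constacyclic_code n (DN \<alpha> \<beta>) C"
  shows "\<exists>G. G \<noteq> 0 \<and> G dvd H \<and> C = D G"
proof -
  have lin: "linear_code n C" using C by (simp add: constacyclic_code_def)
  have len: "\<And>c. c \<in> C \<Longrightarrow> length c = n" using lin by (simp add: linear_code_def)
  define J where "J = {P. \<exists>c\<in>C. H dvd P - Phi c}"
  have cong: "P' \<in> J" if PJ: "P \<in> J" and HP: "H dvd P' - P" for P P'
  proof -
    obtain c where "c \<in> C" "H dvd P - Phi c" using PJ unfolding J_def by blast
    then show ?thesis using dvd_diff_trans[OF HP] by (auto simp: J_def)
  qed
  have J0: "0 \<in> J" unfolding J_def mem_Collect_eq using lin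
    by (intro bexI[of _ "replicate n 0"]) (auto simp: linear_code_def Phi_def)
  have Jadd: "P + Q \<in> J" if PJ: "P \<in> J" and QJ: "Q \<in> J" for P Q
  proof -
    obtain c d where cd: "c \<in> C" "d \<in> C" "H dvd P - Phi c" "H dvd Q - Phi d"
      using PJ QJ unfolding J_def by blast
    have "map2 (+) c d \<in> C" using lin cd by (simp add: linear_code_def)
    moreover have "H dvd (P + Q) - Phi (map2 (+) c d)"
    proof -
      have "H dvd (P - Phi c) + (Q - Phi d)" using cd by (rule_tac dvd_add) auto
      then show ?thesis using cd len by (simp add: Phi_add algebra_simps)
    qed
    ultimately show ?thesis by (auto simp: J_def)
  qed
  have Jsmult: "smult a P \<in> J" if PJ: "P \<in> J" for a P
  proof -
    obtain c where c: "c \<in> C" "H dvd P - Phi c" using PJ unfolding J_def by blast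
    have "map ((*) (emb a)) c \<in> C" using lin c by (simp add: linear_code_def)
    moreover have "H dvd smult a P - Phi (map ((*) (emb a)) c)"
    proof -
      have "H dvd smult a P - smult a (Phi c)" using c
        by (metis dvd_smult smult_diff_right)
      moreover have "H dvd Phi (map ((*) (emb a)) c) - smult a (Phi c)"
        using Phi_scal[of "emb a" c] by (simp add: psi_const_emb)
      ultimately show ?thesis using dvd_diff_trans dvd_diff_sym by blast
    qed
    ultimately show ?thesis by (auto simp: J_def)
  qed
  have Jx: "[:0, 1:] * P \<in> J" if PJ: "P \<in> J" for P
  proof -
    obtain c where c: "c \<in> C" "H dvd P - Phi c" using PJ unfolding J_def by blast
    have "const_shift (DN \<alpha> \<beta>) c \<in> C" using C c by (simp add: constacyclic_code_def)
    moreover have "H dvd [:0, 1:] * P - Phi (const_shift (DN \<alpha> \<beta>) c)"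
    proof -
      have "H dvd [:0, 1:] * (P - Phi c)" using c(2) by (rule dvd_mult)
      moreover have "H dvd Phi (const_shift (DN \<alpha> \<beta>) c) - [:0, 1:] * Phi c"
        using Phi_shift len c by blast
      moreover have "[:0, 1:] * (P - Phi c) = [:0, 1:] * P - [:0, 1:] * Phi c"
        by (rule right_diff_distrib)
      ultimately show ?thesis using dvd_diff_trans dvd_diff_sym by metis
    qed
    ultimately show ?thesis by (auto simp: J_def)
  qed
  have Jmult: "Q * P \<in> J" if "P \<in> J" for P Q
  proof (induction Q)
    case 0 show ?case using J0 by simp
  next
    case (pCons a Q)
    have "pCons a Q * P = smult a P + [:0, 1:] * (Q * P)"
      by simp
    then show ?case using Jadd[OF Jsmult[OF that] Jx[OF pCons(2)]] by simp
  qed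
  have HJ: "H \<in> J" using cong[OF J0, of H] by simp
  obtain G where G: "G \<in> J \<and> G \<noteq> 0" "\<forall>P. P \<in> J \<and> P \<noteq> 0 \<longrightarrow> degree G \<le> degree P"
    using ex_has_least_nat[of "\<lambda>P. P \<in> J \<and> P \<noteq> 0" H degree] HJ H_nz by blast
  have Gdvd: "G dvd P" if "P \<in> J" for P
  proof (rule ccontr)
    assume nd: "\<not> G dvd P"
    have "P mod G = P + (- (P div G)) * G" by (simp add: minus_div_mult_eq_mod[symmetric])
    then have "P mod G \<in> J" using Jadd[OF that Jmult[OF conjunct1[OF G(1)], of "- (P div G)"]] by simp
    moreover have "P mod G \<noteq> 0" using nd by (simp add: mod_eq_0_iff_dvd)
    moreover have "degree (P mod G) < degree G"
      using degree_mod_less[of G P] G(1) \<open>P mod G \<noteq> 0\<close> by blast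
    ultimately show False using G(2) leD by blast
  qed
  have JG: "P \<in> J \<longleftrightarrow> G dvd P" for P
  proof
    assume "G dvd P"
    then obtain Q where "P = Q * G" by (metis dvd_def mult.commute)
    then show "P \<in> J" using Jmult G(1) by simp
  qed (rule Gdvd)
  have "C = D G"
  proof
    show "C \<subseteq> D G"
    proof
      fix c assume "c \<in> C"
      then have "Phi c \<in> J" unfolding J_def mem_Collect_eq by (intro bexI[of _ c]) auto
      then show "c \<in> D G" using JG len \<open>c \<in> C\<close> by (simp add: D_def)
    qed
  next
    show "D G \<subseteq> C"
    proof
      fix c assume "c \<in> D G"
      then have c: "length c = n" "Phi c \<in> J" using JG by (auto simp: D_def)
      then obtain d where d: "d \<in> C" "H dvd Phi c - Phi d" by (auto simp: J_def)
      have "degree (Phi c - Phi d) < degree H"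
        using degree_diff_less[OF Phi_deg[OF c(1)] Phi_deg[OF len[OF d(1)]]] degree_H by simp
      then have "Phi c - Phi d = 0" using d(2) by (metis dvd_imp_degree_le leD)
      then have "c = d" by (intro Phi_inj[OF c(1) len[OF d(1)]]) simp
      then show "c \<in> C" using d by simp
    qed
  qed
  then show ?thesis using G(1) Gdvd[OF HJ] by blast
qed

end


context dn begin

lemma degree_Elam: "degree Elam = n"
  using n_pos unfolding Elam_def diff_conv_add_uminus
  by (subst degree_add_eq_left) (auto simp: degree_monom_eq)

lemma coeff_Elam_n: "coeff Elam n = 1"
  using n_pos by (simp add: Elam_def coeff_monom coeff_pCons split: nat.splits)

lemma lead_Elam: "lead_coeff Elam = 1"
  by (simp add: degree_Elam coeff_Elam_n)

lemma K_lemma: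
  assumes "Elam dvd P" "degree P \<le> 2 * n - 2"
  shows "coeff P (n - 1) = 0"
proof -
  obtain q where P: "P = q * Elam" using assms(1) by (metis dvd_def mult.commute)
  show ?thesis
  proof (cases "q = 0")
    case True then show ?thesis by (simp add: P)
  next
    case False
    have "coeff P (degree q + degree Elam) = lead_coeff q * lead_coeff Elam"
      unfolding P by (rule coeff_mult_degree_sum)
    then have "coeff P (degree q + n) \<noteq> 0" using False by (simp add: degree_Elam coeff_Elam_n)
    then have "degree q + n \<le> degree P" by (rule le_degree)
    then have dq: "degree q < n - 1" using assms(2) n_pos by linarith
    have "coeff P (n - 1) = coeff (monom 1 n * q) (n - 1) - coeff q (n - 1) * DN \<alpha> \<beta>"
      by (simp add: P Elam_def right_diff_distrib mult.commute)
    also have "\<dots> = 0" using dq n_pos by (simp add: coeff_monom_mult coeff_eq_0)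
    finally show ?thesis .
  qed
qed

lemma inner_coeff:
  assumes "length a = n" "length c = n"
  shows "inner a c = coeff (Poly (rev a) * Poly c) (n - 1)"
proof -
  have "coeff (Poly (rev a) * Poly c) (n - 1) =
      (\<Sum>i\<le>n - 1. coeff (Poly (rev a)) i * coeff (Poly c) (n - 1 - i))"
    by (rule coeff_mult)
  also have "\<dots> = (\<Sum>i<n. a ! (n - Suc i) * c ! (n - Suc i))"
  proof -
    have "{..n - 1} = {..<n}" using n_pos by auto
    moreover have "coeff (Poly (rev a)) i * coeff (Poly c) (n - 1 - i) = a ! (n - Suc i) * c ! (n - Suc i)"
      if "i < n" for i
      using that assms by (simp add: nth_default_def rev_nth)
    ultimately show ?thesis by (auto intro: sum.cong)
  qed
  also have "\<dots> = (\<Sum>j<n. a ! j * c ! j)"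
    by (rule sum.nat_diff_reindex)
  also have "\<dots> = inner a c"
    unfolding inner_def using assms
    by (simp add: sum_list_sum_nth atLeast0LessThan)
  finally show ?thesis by simp
qed

lemma degree_Poly_le: "length c = n \<Longrightarrow> degree (Poly c) \<le> n - 1"
  using degree_Poly_less[of c n] n_pos by simp

lemma dual_D:
  assumes G0: "G \<noteq> 0" and GH: "G dvd H"
  shows "dual_code n (D G) = rev ` D (H div G)"
proof
  have HG: "H = (H div G) * G" using GH by simp
  show "rev ` D (H div G) \<subseteq> dual_code n (D G)"
  proof
    fix b assume "b \<in> rev ` D (H div G)"
    then obtain a where b: "b = rev a" and a: "a \<in> D (H div G)" by blast
    have la: "length a = n" using a by (simp add: D_def)
    have "inner b c = 0" if c: "c \<in> D G" for c
    proof -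
      have lc: "length c = n" using c by (simp add: D_def)
      have "H dvd Phi a * Phi c"
        using a c HG by (metis D_def mem_Collect_eq mult_dvd_mono)
      then have "H dvd psi (Poly a * Poly c)"
        using dvd_via_H[OF dvd_refl psi_mult] by (simp add: Phi_def)
      then have "Elam dvd Poly a * Poly c" by (rule kernel)
      moreover have "degree (Poly a * Poly c) \<le> 2 * n - 2"
        using degree_mult_le[of "Poly a" "Poly c"] degree_Poly_le[OF la] degree_Poly_le[OF lc]
        by linarith
      ultimately have "coeff (Poly a * Poly c) (n - 1) = 0" by (rule K_lemma)
      then show ?thesis using inner_coeff[of b c] la lc b by simp
    qed
    then show "b \<in> dual_code n (D G)" using la b by (simp add: dual_code_def)
  qed
next
  show "dual_code n (D G) \<subseteq> rev ` D (H div G)"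
  proof
    fix b assume b: "b \<in> dual_code n (D G)"
    have lb: "length b = n" and orth: "\<And>c. c \<in> D G \<Longrightarrow> inner b c = 0"
      using b by (auto simp: dual_code_def)
    define B where "B = Poly (rev b)"
    define Gh where "Gh = map_poly emb G"
    obtain s where s: "length s = n" "Elam dvd B * Gh - Poly s" using red by blast
    have s0: "s ! (n - 1 - t) = 0" if t: "t < n" for t
    proof -
      obtain ct where ct: "length ct = n" "Elam dvd monom 1 t * Gh - Poly ct" using red by blast
      have "H dvd psi (monom 1 t * Gh - Poly ct)" using ct(2) by (rule psi_Elam_dvd)
      then have h1: "H dvd psi (monom 1 t * Gh) - Phi ct" by (simp add: Phi_def)
      have h2: "H dvd psi (monom 1 t * Gh) - psi (monom 1 t) * G"
        using psi_mult[of "monom 1 t" Gh] by (simp add: Gh_def)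
      have "H dvd Phi ct - psi (monom 1 t) * G"
        using dvd_diff_trans[OF dvd_diff_sym[OF h1] h2] .
      then have "G dvd Phi ct" using dvd_via_H[OF GH] by (metis dvd_triv_right)
      then have ctD: "ct \<in> D G" using ct(1) by (simp add: D_def)
      have i0: "coeff (B * Poly ct) (n - 1) = 0"
        using orth[OF ctD] inner_coeff[OF lb ct(1)] by (simp add: B_def)
      have eq: "B * Poly ct - monom 1 t * Poly s =
          - (B * (monom 1 t * Gh - Poly ct)) + monom 1 t * (B * Gh - Poly s)"
        by (simp add: algebra_simps)
      have "Elam dvd B * Poly ct - monom 1 t * Poly s"
        unfolding eq using ct(2) s(2) by (intro dvd_add dvd_mult dvd_minus_iff[THEN iffD2]) auto
      moreover have "degree (B * Poly ct - monom 1 t * Poly s) \<le> 2 * n - 2"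
      proof (rule degree_diff_le)
        show "degree (B * Poly ct) \<le> 2 * n - 2"
          using degree_mult_le[of B "Poly ct"] degree_Poly_le[OF ct(1)] degree_Poly_le[of "rev b"] lb
          by (simp add: B_def)
        show "degree (monom 1 t * Poly s) \<le> 2 * n - 2"
          using degree_mult_le[of "monom (1::'a dnum) t" "Poly s"] degree_Poly_le[OF s(1)]
            degree_monom_le[of "1::'a dnum" t] t by linarith
      qed
      ultimately have "coeff (B * Poly ct - monom 1 t * Poly s) (n - 1) = 0" by (rule K_lemma)
      then have "coeff (monom 1 t * Poly s) (n - 1) = 0" using i0 by simp
      then have "coeff (Poly s) (n - 1 - t) = 0" using t by (simp add: coeff_monom_mult split: if_splits del: coeff_Poly_eq)
      moreover have "n - 1 - t < length s" using t s(1) by simp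
      ultimately show ?thesis by (metis coeff_Poly_eq nth_default_nth)
    qed
    have "Poly s = 0"
    proof (rule poly_eqI)
      fix j
      show "coeff (Poly s) j = coeff 0 j"
      proof (cases "j < n")
        case True
        then have "s ! j = 0" using s0[of "n - 1 - j"] by simp
        then show ?thesis using True s(1) by (simp add: nth_default_def)
      qed (use s(1) in \<open>simp add: nth_default_def\<close>)
    qed
    then have "Elam dvd B * Gh" using s(2) by simp
    then have "H dvd psi (B * Gh)" by (rule psi_Elam_dvd)
    then have "H dvd Phi (rev b) * G"
      using dvd_via_H[OF dvd_refl dvd_diff_sym[OF psi_mult[of B Gh]]] by (simp add: Gh_def B_def Phi_def)
    then have "(H div G) * G dvd Phi (rev b) * G" using GH by simp
    then have "H div G dvd Phi (rev b)" using G0 by simp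
    then have "rev b \<in> D (H div G)" using lb by (simp add: D_def)
    then show "b \<in> rev ` D (H div G)" by (metis rev_rev_ident imageI)
  qed
qed

end

locale dnf = dn n \<alpha> \<beta> for n and \<alpha> \<beta> :: "'a::{field,finite}"
begin

lemma card_D:
  assumes G0: "G \<noteq> 0" and GH: "G dvd H"
  shows "card (D G) = card (UNIV :: 'a set) ^ (2 * n - degree G)"
proof -
  define k where "k = 2 * n - degree G"
  have dG: "degree G \<le> 2 * n" using dvd_imp_degree_le[OF GH H_nz] degree_H by simp
  have inj: "inj_on Phi (D G)" by (intro inj_onI Phi_inj) (auto simp: D_def)
  have key: "Q = Poly (map (coeff Q) [0..<k])" if "degree (G * Q) < 2 * n" for Q
  proof (cases "Q = 0")
    case True
    then show ?thesis by (intro poly_eqI) (auto simp: nth_default_def)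
  next
    case False
    then have "degree Q < k" using that G0 by (simp add: degree_mult_eq k_def)
    then show ?thesis by (simp add: Poly_map_coeff)
  qed
  have img: "Phi ` D G = (\<lambda>xs. G * Poly xs) ` {xs. length xs = k}"
  proof
    show "Phi ` D G \<subseteq> (\<lambda>xs. G * Poly xs) ` {xs. length xs = k}"
    proof
      fix P assume "P \<in> Phi ` D G"
      then obtain c where c: "c \<in> D G" "P = Phi c" by blast
      then obtain Q where Q: "P = G * Q" using dvdE by (force simp: D_def)
      have lc: "length c = n" using c by (simp add: D_def)
      have "degree (G * Q) < 2 * n" using Phi_deg[OF lc] c(2) Q by simp
      then have "Q = Poly (map (coeff Q) [0..<k])" by (rule key)
      then show "P \<in> (\<lambda>xs. G * Poly xs) ` {xs. length xs = k}"
        using Q by (intro image_eqI[of _ _ "map (coeff Q) [0..<k]"]) auto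
    qed
  next
    show "(\<lambda>xs. G * Poly xs) ` {xs. length xs = k} \<subseteq> Phi ` D G"
    proof
      fix P assume "P \<in> (\<lambda>xs. G * Poly xs) ` {xs. length xs = k}"
      then obtain xs where xs: "length xs = k" "P = G * Poly xs" by blast
      have "degree P < 2 * n"
      proof (cases "Poly xs = 0")
        case True then show ?thesis using xs n_pos by simp
      next
        case False
        then have "xs \<noteq> []" by auto
        then have "degree (Poly xs) < k" using xs(1) degree_Poly_less[of xs k] by auto
        then show ?thesis using xs(2) False G0 dG by (simp add: degree_mult_eq k_def)
      qed
      then obtain c where c: "length c = n" "Phi c = P" using Phi_surj by blast
      then have "c \<in> D G" using xs(2) by (simp add: D_def)
      then show "P \<in> Phi ` D G" using c by blast
    qed
  qed
  have inj2: "inj_on (\<lambda>xs. G * Poly xs) {xs. length xs = k}"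
  proof (intro inj_onI)
    fix xs ys assume "xs \<in> {xs. length xs = k}" "ys \<in> {xs. length xs = k}" "G * Poly xs = G * Poly ys"
    then show "xs = ys" using G0 Poly_eq_len[of xs ys] by simp
  qed
  have "card (D G) = card (Phi ` D G)" using card_image[OF inj] by simp
  also have "\<dots> = card {xs :: 'a list. length xs = k}" unfolding img using card_image[OF inj2] .
  also have "\<dots> = card (UNIV :: 'a set) ^ k" using card_lists_length_eq[of "UNIV :: 'a set" k] by simp
  finally show ?thesis by (simp add: k_def)
qed

end


definition negl :: "'r::comm_ring_1 list \<Rightarrow> 'r list" where
  "negl c = map (\<lambda>k. if even k then c ! k else - (c ! k)) [0..<length c]"

definition negp :: "'a::comm_ring_1 poly \<Rightarrow> 'a poly" where
  "negp P = pcompose P [:0, -1:]"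

lemma length_negl[simp]: "length (negl c) = length c" by (simp add: negl_def)

lemma negl_negl[simp]: "negl (negl c) = c"
  by (rule nth_equalityI) (auto simp: negl_def)

lemma coeff_negp: "coeff (negp P) k = (-1) ^ k * coeff P k"
  by (simp add: negp_def coeff_pcompose_linear)

lemma negp_negp[simp]: "negp (negp P) = P"
  by (rule poly_eqI) (simp add: coeff_negp mult.assoc[symmetric] power_mult_distrib[symmetric])

lemma negp_add: "negp (P + Q) = negp P + negp Q" by (simp add: negp_def pcompose_add)
lemma negp_mult: "negp (P * Q) = negp P * negp Q" by (simp add: negp_def pcompose_mult)
lemma negp_smult: "negp (smult a P) = smult a (negp P)" by (simp add: negp_def pcompose_smult)

lemma negp_dvd: "G dvd P \<Longrightarrow> negp G dvd negp P"
  by (metis dvd_def negp_mult)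

lemma coeff_Poly_negl: "coeff (Poly (negl c)) k = (if even k then coeff (Poly c) k else - coeff (Poly c) k)"
  by (simp add: negl_def nth_default_def)

context dn begin

lemma Rp_negl: "Rp (Poly (negl c)) = negp (Rp (Poly c))"
  by (rule poly_eqI) (simp add: coeff_negp coeff_Poly_negl del: coeff_Poly_eq)
lemma Up_negl: "Up (Poly (negl c)) = negp (Up (Poly c))"
  by (rule poly_eqI) (simp add: coeff_negp coeff_Poly_negl del: coeff_Poly_eq)

lemma negp_E: assumes "even n" shows "negp E = E"
  by (rule poly_eqI) (use assms in \<open>auto simp: coeff_negp E_def coeff_monom coeff_pCons split: nat.splits\<close>)

lemma Phi_negl: assumes "even n" shows "Phi (negl c) = negp (Phi c)"
  by (simp add: Phi_def psi_def Rp_negl Up_negl negp_add negp_smult negp_mult negp_E[OF assms])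

lemma negl_D: assumes "even n" shows "negl ` D G = D (negp G)"
proof
  show "negl ` D G \<subseteq> D (negp G)"
  proof
    fix d assume "d \<in> negl ` D G"
    then obtain c where c: "c \<in> D G" "d = negl c" by blast
    then have "length c = n" "G dvd Phi c" by (simp_all add: D_def)
    then show "d \<in> D (negp G)" using c(2) negp_dvd by (simp add: D_def Phi_negl[OF assms])
  qed
next
  show "D (negp G) \<subseteq> negl ` D G"
  proof
    fix d assume "d \<in> D (negp G)"
    then have "length d = n" "negp G dvd Phi d" by (simp_all add: D_def)
    then have "negl d \<in> D G"
      using negp_dvd[of "negp G" "Phi d"] by (simp add: D_def Phi_negl[OF assms])
    then show "d \<in> negl ` D G" by (metis negl_negl imageI)
  qed
qed

definition sig :: "nat \<Rightarrow> nat" where "sig k = (if k < n then n - 1 - k else k)"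
definition wt :: "nat \<Rightarrow> 'a dnum" where "wt k = (if even (n - 1 - k) then 1 else -1)"

lemma sig_permutes: "sig permutes {..<n}"
proof (rule bij_imp_permutes)
  show "bij_betw sig {..<n} {..<n}"
    by (rule bij_betw_byWitness[where f' = sig]) (auto simp: sig_def)
qed (simp add: sig_def)

lemma wt_unit: "wt k dvd 1" by (simp add: wt_def)

lemma T_eq: assumes "length c = n" shows "monomial_map n sig wt c = rev (negl c)"
proof (rule nth_equalityI)
  show "length (monomial_map n sig wt c) = length (rev (negl c))"
    using assms by (simp add: monomial_map_def)
next
  fix k assume "k < length (monomial_map n sig wt c)"
  then have k: "k < n" by (simp add: monomial_map_def)
  have "rev (negl c) ! k = negl c ! (n - Suc k)" using k assms by (simp add: rev_nth)
  also have "\<dots> = (if even (n - Suc k) then c ! (n - Suc k) else - (c ! (n - Suc k)))"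
    using k assms by (simp add: negl_def)
  finally show "monomial_map n sig wt c ! k = rev (negl c) ! k"
    using k by (simp add: monomial_map_def sig_def wt_def)
qed

lemma isodual_D:
  assumes "even n" "G \<noteq> 0" "G dvd H" "negp G = H div G"
  shows "isodual n (D G)"
proof -
  have "monomial_map n sig wt ` D G = rev ` negl ` D G"
    by (auto simp: D_def T_eq image_iff)
  also have "\<dots> = dual_code n (D G)"
    using negl_D[OF assms(1)] dual_D[OF assms(2,3)] assms(4) by simp
  finally show ?thesis unfolding isodual_def using sig_permutes wt_unit by blast
qed

end

lemma monomial_map_inj:
  assumes "\<sigma> permutes {..<n}" "\<forall>k<n. w k dvd (1::'r::comm_ring_1)"
  shows "inj_on (monomial_map n \<sigma> w) {c. length c = n}"
proof (rule inj_onI)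
  fix c d assume c: "c \<in> {c. length c = n}" and d: "d \<in> {c. length c = n}"
    and eq: "monomial_map n \<sigma> w c = monomial_map n \<sigma> w d"
  have e: "c ! \<sigma> k = d ! \<sigma> k" if k: "k < n" for k
  proof -
    have "w k * c ! \<sigma> k = w k * d ! \<sigma> k"
      using arg_cong[OF eq, of "\<lambda>l. l ! k"] k by (simp add: monomial_map_def)
    moreover obtain u where "1 = w k * u" using assms(2) k by (auto elim!: dvdE)
    ultimately have "u * (w k * c ! \<sigma> k) = u * (w k * d ! \<sigma> k)" by simp
    then show ?thesis using \<open>1 = w k * u\<close> by (simp add: mult.assoc[symmetric] mult.commute[of u])
  qed
  show "c = d"
  proof (rule nth_equalityI)
    show "length c = length d" using c d by simp
  next
    fix j assume "j < length c"
    then have j: "j < n" using c by simp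
    obtain k where "\<sigma> k = j" using assms(1) by (metis permutes_surj surj_def)
    moreover have "k < n"
    proof (rule ccontr)
      assume "\<not> k < n"
      then have "\<sigma> k = k" using assms(1) by (simp add: permutes_def)
      then show False using \<open>\<sigma> k = j\<close> j \<open>\<not> k < n\<close> by simp
    qed
    ultimately show "c ! j = d ! j" using e by blast
  qed
qed

lemma isodual_card:
  assumes "isodual n C" "C \<subseteq> {c. length c = n}"
  shows "card C = card (dual_code n C)"
proof -
  obtain \<sigma> w where sw: "\<sigma> permutes {..<n}" "\<forall>k<n. w k dvd 1" "monomial_map n \<sigma> w ` C = dual_code n C"
    using assms(1) unfolding isodual_def by blast
  have "inj_on (monomial_map n \<sigma> w) C"
    using monomial_map_inj[OF sw(1,2)] assms(2) by (rule inj_on_subset)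
  then show ?thesis using sw(3) card_image by metis
qed

context dnf begin

lemma iso_degree:
  assumes "G \<noteq> 0" "G dvd H" "isodual n (D G)"
  shows "degree G = n"
proof -
  have HG: "H = (H div G) * G" using assms(2) by simp
  then have HG0: "H div G \<noteq> 0" using H_nz by auto
  have dHG: "degree (H div G) + degree G = 2 * n"
    using degree_mult_eq[OF HG0 assms(1)] HG degree_H by simp
  have "card (D G) = card (dual_code n (D G))"
    using isodual_card[OF assms(3)] by (auto simp: D_def)
  also have "\<dots> = card (D (H div G))"
    using dual_D[OF assms(1,2)] by (simp add: card_image)
  finally have "card (UNIV :: 'a set) ^ (2 * n - degree G) = card (UNIV :: 'a set) ^ (2 * n - degree (H div G))"
    using card_D[OF assms(1,2)] card_D[OF HG0] HG by (metis dvd_triv_left)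
  moreover have "1 < card (UNIV :: 'a set)"
  proof -
    have "card {0, 1 :: 'a} \<le> card (UNIV :: 'a set)" by (rule card_mono) auto
    then show ?thesis by simp
  qed
  ultimately have "2 * n - degree G = 2 * n - degree (H div G)" by simp
  then show ?thesis using dHG by linarith
qed

end


lemma my_CHAR_dvd_CARD: "CHAR('a::ring_1) dvd card (UNIV :: 'a set)"
proof (cases "card (UNIV :: 'a set) = 0")
  case False
  hence [intro]: "CHAR('a) > 0"
    by (simp add: card_eq_0_iff finite_imp_CHAR_pos)
  define G where "G = \<lparr> carrier = (UNIV :: 'a set), monoid.mult = (+), one = (0 :: 'a) \<rparr>"
  define H where "H = (of_nat ` {..<CHAR('a)} :: 'a set)"
  interpret group G
  proof (rule groupI)
    fix x assume x: "x \<in> carrier G"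
    show "\<exists>y\<in>carrier G. y \<otimes>\<^bsub>G\<^esub> x = \<one>\<^bsub>G\<^esub>"
      by (intro bexI[of _ "-x"]) (auto simp: G_def)
  qed (auto simp: G_def add_ac)
  interpret subgroup H G
  proof
    show "\<one>\<^bsub>G\<^esub> \<in> H"
      using False unfolding G_def H_def by force
  next
    fix x y :: 'a
    assume "x \<in> H" "y \<in> H"
    then obtain x' y' where [simp]: "x = of_nat x'" "y = of_nat y'"
      by (auto simp: H_def)
    have "x + y = of_nat ((x' + y') mod CHAR('a))"
      by (auto simp flip: of_nat_add simp: of_nat_eq_iff_cong_CHAR)
    moreover have "(x' + y') mod CHAR('a) < CHAR('a)"
      using H_def \<open>y \<in> H\<close> by fastforce
    ultimately show "x \<otimes>\<^bsub>G\<^esub> y \<in> H"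
      by (auto simp: H_def G_def intro!: imageI)
  next
    fix x :: 'a
    assume x: "x \<in> H"
    then obtain x' where [simp]: "x = of_nat x'" and x': "x' < CHAR('a)"
      by (auto simp: H_def)
    have "CHAR('a) dvd x' + (CHAR('a) - x') mod CHAR('a)"
      using mod_eq_0_iff_dvd mod_if x' by fastforce
    hence "x + of_nat ((CHAR('a) - x') mod CHAR('a)) = 0"
      by (auto simp flip: of_nat_add simp: of_nat_eq_0_iff_char_dvd)
    moreover from this have "inv\<^bsub>G\<^esub> x = of_nat ((CHAR('a) - x') mod CHAR('a))"
      by (intro inv_equality) (auto simp: G_def add_ac)
    moreover have "of_nat ((CHAR('a) - x') mod CHAR('a)) \<in> H"
      unfolding H_def using \<open>CHAR('a) > 0\<close> by (intro imageI) auto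
    ultimately show "inv\<^bsub>G\<^esub> x \<in> H" by force
  qed (auto simp: G_def H_def)
  have "card H dvd card (rcosets\<^bsub>G\<^esub> H) * card H"
    by simp
  also have "card (rcosets\<^bsub>G\<^esub> H) * card H = Coset.order G"
  proof (rule lagrange_finite)
    show "finite (carrier G)"
      using False card_ge_0_finite by (auto simp: G_def)
  qed (fact is_subgroup)
  finally have "card H dvd card (UNIV :: 'a set)"
    by (simp add: Coset.order_def G_def)
  also have "card H = card {..<CHAR('a)}"
    unfolding H_def by (intro card_image inj_onI) (auto simp: of_nat_eq_iff_cong_CHAR cong_def)
  finally show "CHAR('a) dvd card (UNIV :: 'a set)"
    by simp
qed auto

lemma char_finite_field:
  assumes "prime p" "card (UNIV :: 'a::{field,finite} set) = p ^ m" "m > 0"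
  shows "CHAR('a) = p"
proof -
  have pos: "CHAR('a) > 0" by (rule finite_imp_CHAR_pos) simp
  have pr: "prime CHAR('a)" using prime_CHAR_semidom[OF pos] .
  have "CHAR('a) dvd p ^ m" using my_CHAR_dvd_CARD[where 'a='a] assms(2) by simp
  then have "CHAR('a) dvd p" using prime_dvd_power pr by blast
  then show ?thesis using primes_dvd_imp_eq pr assms(1) by blast
qed

lemma irr_deg2:
  fixes f :: "'a::field poly"
  assumes "degree f = 2" "\<And>r. poly f r \<noteq> 0"
  shows "irreducible f"
proof (rule irreducibleI)
  show f0: "f \<noteq> 0" using assms(1) by auto
  show "\<not> f dvd 1" using assms(1) is_unit_iff_degree[OF f0] by simp
  have nolin: False if d1: "degree a = 1" and ad: "a dvd f" for a :: "'a poly"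
  proof -
    obtain b0 a1 where a: "a = [:b0, a1:]" "a1 \<noteq> 0" using degree1_coeffs[OF d1] by blast
    have "poly a (- b0 / a1) = 0" using a by (simp add: field_simps)
    then have "poly f (- b0 / a1) = 0" using ad by (metis dvdE mult_eq_0_iff poly_mult)
    then show False using assms(2) by blast
  qed
  fix a b assume ab: "f = a * b"
  then have a0: "a \<noteq> 0" and b0: "b \<noteq> 0" using f0 by auto
  have "degree a + degree b = 2" using ab degree_mult_eq[OF a0 b0] assms(1) by simp
  then consider "degree a = 0" | "degree b = 0" | "degree a = 1" by linarith
  then show "a dvd 1 \<or> b dvd 1"
  proof cases
    case 1 then show ?thesis using a0 is_unit_iff_degree by blast
  next
    case 2 then show ?thesis using b0 is_unit_iff_degree by blast
  next
    case 3 then show ?thesis using nolin[of a] ab by auto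
  qed
qed

lemma fact2:
  fixes f1 f2 :: "'a::field poly"
  assumes p1: "prime_elem f1" and p2: "prime_elem f2"
  shows "G dvd f1 ^ a * f2 ^ b \<Longrightarrow> \<exists>i\<le>a. \<exists>j\<le>b. G dvd f1 ^ i * f2 ^ j \<and> f1 ^ i * f2 ^ j dvd G"
proof (induction "a + b" arbitrary: a b G rule: less_induct)
  case less
  have f10: "f1 \<noteq> 0" using p1 by auto
  have f20: "f2 \<noteq> 0" using p2 by auto
  obtain K where X: "f1 ^ a * f2 ^ b = G * K" using less.prems by (auto elim!: dvdE)
  show ?case
  proof (cases "a > 0")
    case True
    have eq: "f1 ^ a * f2 ^ b = f1 * (f1 ^ (a - 1) * f2 ^ b)" using True by (cases a) auto
    have "f1 dvd G * K" unfolding X[symmetric] eq by simp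
    then consider "f1 dvd G" | "f1 dvd K" using prime_elem_dvd_mult_iff[OF p1] by blast
    then show ?thesis
    proof cases
      case 1
      then obtain G' where G: "G = f1 * G'" by (auto elim!: dvdE)
      have "f1 * (f1 ^ (a - 1) * f2 ^ b) = f1 * (G' * K)" using X unfolding eq G by (simp add: mult.assoc)
      then have "G' dvd f1 ^ (a - 1) * f2 ^ b" using f10 by (metis dvd_triv_left mult_left_cancel)
      then obtain i j where ij: "i \<le> a - 1" "j \<le> b" "G' dvd f1 ^ i * f2 ^ j" "f1 ^ i * f2 ^ j dvd G'"
        using less.hyps[of "a - 1" b G'] True by auto
      show ?thesis
        by (rule exI[of _ "Suc i"], rule conjI, use ij True in simp, rule exI[of _ j])
           (use ij G in \<open>auto simp: mult.assoc intro: mult_dvd_mono\<close>)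
    next
      case 2
      then obtain K' where K: "K = f1 * K'" by (auto elim!: dvdE)
      have "f1 * (f1 ^ (a - 1) * f2 ^ b) = f1 * (G * K')" using X unfolding eq K by (simp add: mult_ac)
      then have "G dvd f1 ^ (a - 1) * f2 ^ b" using f10 by (metis dvd_triv_left mult_left_cancel)
      then obtain i j where ij: "i \<le> a - 1" "j \<le> b" "G dvd f1 ^ i * f2 ^ j" "f1 ^ i * f2 ^ j dvd G"
        using less.hyps[of "a - 1" b G] True by auto
      then show ?thesis by (intro exI[of _ i] exI[of _ j]) auto
    qed
  next
    case a0: False
    show ?thesis
    proof (cases "b > 0")
      case True
      have eq: "f1 ^ a * f2 ^ b = f2 * (f1 ^ a * f2 ^ (b - 1))" using True by (cases b) (auto simp: mult_ac)
      have "f2 dvd G * K" unfolding X[symmetric] eq by simp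
      then consider "f2 dvd G" | "f2 dvd K" using prime_elem_dvd_mult_iff[OF p2] by blast
      then show ?thesis
      proof cases
        case 1
        then obtain G' where G: "G = f2 * G'" by (auto elim!: dvdE)
        have "f2 * (f1 ^ a * f2 ^ (b - 1)) = f2 * (G' * K)" using X unfolding eq G by (simp add: mult.assoc)
        then have "G' dvd f1 ^ a * f2 ^ (b - 1)" using f20 by (metis dvd_triv_left mult_left_cancel)
        then obtain i j where ij: "i \<le> a" "j \<le> b - 1" "G' dvd f1 ^ i * f2 ^ j" "f1 ^ i * f2 ^ j dvd G'"
          using less.hyps[of a "b - 1" G'] True by auto
        have e: "f1 ^ i * f2 ^ Suc j = f2 * (f1 ^ i * f2 ^ j)" by (simp add: mult_ac)
        show ?thesis
          by (rule exI[of _ i], rule conjI, use ij in simp, rule exI[of _ "Suc j"])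
             (use ij G True in \<open>auto simp: e intro: mult_dvd_mono\<close>)
      next
        case 2
        then obtain K' where K: "K = f2 * K'" by (auto elim!: dvdE)
        have "f2 * (f1 ^ a * f2 ^ (b - 1)) = f2 * (G * K')" using X unfolding eq K by (simp add: mult_ac)
        then have "G dvd f1 ^ a * f2 ^ (b - 1)" using f20 by (metis dvd_triv_left mult_left_cancel)
        then obtain i j where ij: "i \<le> a" "j \<le> b - 1" "G dvd f1 ^ i * f2 ^ j" "f1 ^ i * f2 ^ j dvd G"
          using less.hyps[of a "b - 1" G] True by auto
        moreover have "j \<le> b" using ij(2) by simp
        ultimately show ?thesis by blast
      qed
    next
      case False
      then have "G dvd 1" using a0 less.prems by simp
      then show ?thesis by (intro exI[of _ 0]) auto
    qed
  qed
qed



lemma negp_1[simp]: "negp 1 = 1" by (rule poly_eqI) (simp add: coeff_negp coeff_1)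
lemma negp_power: "negp (P ^ k) = negp P ^ k"
  by (induction k) (simp_all add: negp_mult)

context dn begin

lemma psi_1[simp]: "psi 1 = 1" using psi_emb[of 1] by simp

lemma psi_pow: assumes "H dvd psi A - a" shows "H dvd psi (A ^ k) - a ^ k"
proof (induction k)
  case 0 then show ?case by simp
next
  case (Suc k)
  show ?case using psi_cong_mult[OF assms Suc.IH] by simp
qed

lemma psi_quad: "psi [:emb a, emb b, 1:] = [:a, b, 1:]"
  using psi_emb[of "[:a, b, 1:]"] by simp

lemma PIC:
  assumes FH: "F dvd H" and Fg: "H dvd psi g - F"
  shows "principal_ideal_code n (DN \<alpha> \<beta>) g = D F"
proof
  show "principal_ideal_code n (DN \<alpha> \<beta>) g \<subseteq> D F"
  proof
    fix c assume "c \<in> principal_ideal_code n (DN \<alpha> \<beta>) g"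
    then obtain f q where c: "length c = n" "Poly c = f * g + q * Elam"
      unfolding principal_ideal_code_def Elam_def by blast
    have "F dvd psi g" using dvd_via_H[OF FH Fg] by simp
    then have "F dvd psi f * psi g" by simp
    then have "F dvd psi (f * g)" using dvd_via_H[OF FH psi_mult] by blast
    moreover have "F dvd psi (q * Elam)" using psi_Elam_dvd[of "q * Elam"] FH by (simp add: dvd_trans)
    ultimately have "F dvd Phi c" by (simp add: Phi_def c(2))
    then show "c \<in> D F" using c(1) by (simp add: D_def)
  qed
next
  show "D F \<subseteq> principal_ideal_code n (DN \<alpha> \<beta>) g"
  proof
    fix c assume "c \<in> D F"
    then have c: "length c = n" "F dvd Phi c" by (simp_all add: D_def)
    then obtain k where k: "Phi c = F * k" by (auto elim!: dvdE)
    define P where "P = Poly c - map_poly emb k * g"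
    have h1: "H dvd psi (map_poly emb k * g) - k * psi g"
      using psi_mult[of "map_poly emb k" g] by simp
    have h2: "H dvd k * psi g - k * F"
      using dvd_mult[OF Fg, of k] by (simp add: right_diff_distrib mult.commute)
    have "H dvd psi (map_poly emb k * g) - Phi c"
      using dvd_diff_trans[OF h1 h2] k by (simp add: mult.commute)
    then have "H dvd psi P" unfolding P_def using dvd_diff_sym by (simp add: Phi_def)
    then have "Elam dvd P" by (rule kernel)
    then obtain q where "P = q * Elam" by (metis dvd_def mult.commute)
    then have "Poly c = map_poly emb k * g + q * (monom 1 n - [:DN \<alpha> \<beta>:])"
      unfolding P_def Elam_def by (simp add: algebra_simps)
    then show "c \<in> principal_ideal_code n (DN \<alpha> \<beta>) g"
      using c(1) unfolding principal_ideal_code_def by blast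
  qed
qed

end


theorem corollary3p8:
  fixes p m s :: nat
    and \<alpha> \<alpha>\<^sub>0 \<beta> \<gamma> :: "'a::{field,finite}"
  assumes "prime p" and "odd p" and "m > 0" and "s > 0"
    and "card (UNIV :: 'a set) = p ^ m" and "p ^ m mod 4 = 3"
    and "\<alpha> \<noteq> 0" and "\<not> (\<exists>y. y ^ 2 = \<alpha>)"
    and "\<alpha>\<^sub>0 ^ (p ^ s) = \<alpha>"
    and "\<gamma> ^ 4 + 4 * \<alpha>\<^sub>0 = 0"
    and "\<beta> \<noteq> 0"
  shows "{C. constacyclic_code (4 * p ^ s) (DN \<alpha> \<beta>) C \<and> isodual (4 * p ^ s) C} =
    (\<lambda>i. principal_ideal_code (4 * p ^ s) (DN \<alpha> \<beta>)
        ([:emb (\<gamma>\<^sup>2 / 2), emb \<gamma>, 1:] ^ i * [:emb (\<gamma>\<^sup>2 / 2), emb (- \<gamma>), 1:] ^ (2 * p ^ s - i)))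
      ` {0..2 * p ^ s}"
proof -
  note pr = assms(1)
  have ppos: "p > 0" using pr prime_gt_0_nat by blast
  have npos: "4 * p ^ s > 0" using ppos by simp
  interpret dnf "4 * p ^ s" \<alpha> \<beta>
    by unfold_locales (use npos assms(11) in auto)
  have evn: "even (4 * p ^ s)" by simp
  have charp: "CHAR('a) = p" by (rule char_finite_field[OF pr assms(5) assms(3)])
  have two: "(2::'a) \<noteq> 0"
  proof
    assume "(2::'a) = 0"
    then have "of_nat 2 = (0::'a)" by simp
    then have "p dvd 2" using charp of_nat_eq_0_iff_char_dvd by metis
    then have "p \<le> 2" by (simp add: dvd_imp_le)
    moreover have "p \<ge> 2" using pr prime_ge_2_nat by blast
    ultimately show False using assms(2) by simp
  qed
  have four: "(4::'a) \<noteq> 0" using two by (metis mult_eq_0_iff numeral_Bit0 mult_2)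
  have a0nz: "\<alpha>\<^sub>0 \<noteq> 0"
  proof
    assume "\<alpha>\<^sub>0 = 0"
    then have "\<alpha> = 0" using assms(9) ppos by (simp flip: assms(9))
    then show False using assms(7) by simp
  qed
  have g': "\<gamma> ^ 4 = - (4 * \<alpha>\<^sub>0)" using assms(10) by (simp add: eq_neg_iff_add_eq_0)
  have c: "\<gamma>\<^sup>2 / 2 * (\<gamma>\<^sup>2 / 2) = - \<alpha>\<^sub>0"
  proof -
    have "\<gamma>\<^sup>2 / 2 * (\<gamma>\<^sup>2 / 2) = \<gamma> ^ 4 / 4" by (simp add: power2_eq_square power4_eq_xxxx)
    also have "\<dots> = - \<alpha>\<^sub>0" using g' four by simp
    finally show ?thesis .
  qed
  define f1 :: "'a poly" where "f1 = [:\<gamma>\<^sup>2 / 2, \<gamma>, 1:]"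
  define f2 :: "'a poly" where "f2 = [:\<gamma>\<^sup>2 / 2, - \<gamma>, 1:]"
  have prod: "f1 * f2 = monom 1 4 - [:\<alpha>\<^sub>0:]"
  proof -
    have m4: "monom (1::'a) 4 = [:0, 0, 0, 0, 1:]" by (simp add: monom_Suc numeral_eq_Suc monom_0)
    have cc: "\<gamma>\<^sup>2 / 2 + \<gamma>\<^sup>2 / 2 = \<gamma> * \<gamma>" using two by (simp add: power2_eq_square field_simps)
    show ?thesis unfolding m4 f1_def f2_def using c cc
      by (simp add: algebra_simps)
  qed
  have Eeq: "E = (f1 * f2) ^ (p ^ s)"
  proof -
    have pc: "prime CHAR('a poly)" using charp pr by simp
    have "(monom 1 4 + - [:\<alpha>\<^sub>0:]) ^ (p ^ s) = monom (1::'a) 4 ^ (p ^ s) + (- [:\<alpha>\<^sub>0:]) ^ (p ^ s)"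
      by (rule freshmans_dream'[OF pc]) (simp add: charp)
    also have "monom (1::'a) 4 ^ (p ^ s) = monom 1 (4 * p ^ s)" by (simp add: monom_power)
    also have "(- [:\<alpha>\<^sub>0:]) ^ (p ^ s) = - [:\<alpha>:]"
      using assms(2) by (simp add: poly_const_pow assms(9))
    finally have "(monom 1 4 + - [:\<alpha>\<^sub>0:]) ^ (p ^ s) = monom 1 (4 * p ^ s) + - [:\<alpha>:]" .
    then show ?thesis by (simp only: prod E_def diff_conv_add_uminus)
  qed
  have Heq: "H = f1 ^ (2 * p ^ s) * f2 ^ (2 * p ^ s)"
  proof -
    have "H = ((f1 * f2) ^ (p ^ s)) ^ 2" by (simp only: H_def Eeq)
    also have "\<dots> = (f1 * f2) ^ (2 * p ^ s)" by (metis power_mult mult.commute)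
    also have "\<dots> = f1 ^ (2 * p ^ s) * f2 ^ (2 * p ^ s)" by (rule power_mult_distrib)
    finally show ?thesis .
  qed
  have noroot: "poly (f1 * f2) r \<noteq> 0" for r
  proof
    assume "poly (f1 * f2) r = 0"
    then have "r ^ 4 = \<alpha>\<^sub>0" by (simp add: prod poly_monom)
    then have "(r ^ (2 * p ^ s)) ^ 2 = \<alpha>"
      by (simp add: assms(9)[symmetric] power_mult[symmetric] mult.commute mult.left_commute)
         (metis power_mult mult.commute)
    then show False using assms(8) by blast
  qed
  have nr1: "poly f1 r \<noteq> 0" for r using noroot[of r] by auto
  have nr2: "poly f2 r \<noteq> 0" for r using noroot[of r] by auto
  have pf1: "prime_elem f1"
    by (intro field_poly_irreducible_imp_prime irr_deg2[OF _ nr1]) (simp add: f1_def)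
  have pf2: "prime_elem f2"
    by (intro field_poly_irreducible_imp_prime irr_deg2[OF _ nr2]) (simp add: f2_def)
  have f10: "f1 \<noteq> 0" and f20: "f2 \<noteq> 0" by (auto simp: f1_def f2_def)
  have nf1: "negp f1 = f2" by (simp add: negp_def pcompose_pCons f1_def f2_def)
  have nf2: "negp f2 = f1" by (simp add: negp_def pcompose_pCons f1_def f2_def)
  define F where "F i = f1 ^ i * f2 ^ (2 * p ^ s - i)" for i
  define g where "g i = [:emb (\<gamma>\<^sup>2 / 2), emb \<gamma>, 1:] ^ i * [:emb (\<gamma>\<^sup>2 / 2), emb (- \<gamma>), 1:] ^ (2 * p ^ s - i)" for i
  have F0: "F i \<noteq> 0" for i using f10 f20 by (simp add: F_def)
  have FH: "F i * (f1 ^ (2 * p ^ s - i) * f2 ^ i) = H" if "i \<le> 2 * p ^ s" for i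
  proof -
    have "F i * (f1 ^ (2 * p ^ s - i) * f2 ^ i) = (f1 ^ i * f1 ^ (2 * p ^ s - i)) * (f2 ^ (2 * p ^ s - i) * f2 ^ i)"
      by (simp add: F_def mult_ac)
    also have "\<dots> = H" using that by (simp add: Heq flip: power_add)
    finally show ?thesis .
  qed
  have FdH: "F i dvd H" if "i \<le> 2 * p ^ s" for i using FH[OF that] by (metis dvd_triv_left)
  have psig: "H dvd psi (g i) - F i" for i
  proof -
    have a: "H dvd psi ([:emb (\<gamma>\<^sup>2 / 2), emb \<gamma>, 1:] ^ i) - f1 ^ i"
      by (rule psi_pow) (simp add: psi_quad f1_def)
    have b: "H dvd psi ([:emb (\<gamma>\<^sup>2 / 2), emb (- \<gamma>), 1:] ^ (2 * p ^ s - i)) - f2 ^ (2 * p ^ s - i)"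
      by (rule psi_pow) (simp add: psi_quad f2_def)
    show ?thesis using psi_cong_mult[OF a b] by (simp add: g_def F_def)
  qed
  have PICi: "principal_ideal_code (4 * p ^ s) (DN \<alpha> \<beta>) (g i) = D (F i)" if "i \<le> 2 * p ^ s" for i
    by (rule PIC[OF FdH[OF that] psig])
  have negF: "negp (F i) = H div F i" if "i \<le> 2 * p ^ s" for i
  proof -
    have "H div F i = f1 ^ (2 * p ^ s - i) * f2 ^ i"
      using FH[OF that] F0[of i] by (metis nonzero_mult_div_cancel_left)
    then show ?thesis by (simp add: F_def negp_mult negp_power nf1 nf2 mult.commute)
  qed
  show ?thesis
  proof (intro equalityI subsetI)
    fix C assume "C \<in> {C. constacyclic_code (4 * p ^ s) (DN \<alpha> \<beta>) C \<and> isodual (4 * p ^ s) C}"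
    then have C: "constacyclic_code (4 * p ^ s) (DN \<alpha> \<beta>) C" "isodual (4 * p ^ s) C" by auto
    obtain G where G: "G \<noteq> 0" "G dvd H" "C = D G" using classify[OF C(1)] by blast
    have dG: "degree G = 4 * p ^ s" using iso_degree[OF G(1,2)] C(2) G(3) by simp
    obtain i j where ij: "i \<le> 2 * p ^ s" "j \<le> 2 * p ^ s" "G dvd f1 ^ i * f2 ^ j" "f1 ^ i * f2 ^ j dvd G"
      using fact2[OF pf1 pf2, of G "2 * p ^ s" "2 * p ^ s"] G(2) Heq by auto
    have nz: "f1 ^ i * f2 ^ j \<noteq> 0" using f10 f20 by simp
    have "degree G = degree (f1 ^ i * f2 ^ j)"
      using dvd_imp_degree_le[OF ij(3) nz] dvd_imp_degree_le[OF ij(4) G(1)] by simp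
    also have "\<dots> = 2 * i + 2 * j" using f10 f20
      by (simp add: degree_mult_eq degree_power_eq f1_def f2_def)
    finally have "j = 2 * p ^ s - i" using dG by simp
    then have "D G = D (F i)"
      using ij(3,4) unfolding D_def F_def by (auto intro: dvd_trans)
    then have "C = principal_ideal_code (4 * p ^ s) (DN \<alpha> \<beta>) (g i)" using G(3) PICi[OF ij(1)] by simp
    then show "C \<in> (\<lambda>i. principal_ideal_code (4 * p ^ s) (DN \<alpha> \<beta>)
        ([:emb (\<gamma>\<^sup>2 / 2), emb \<gamma>, 1:] ^ i * [:emb (\<gamma>\<^sup>2 / 2), emb (- \<gamma>), 1:] ^ (2 * p ^ s - i)))
      ` {0..2 * p ^ s}" using ij(1) unfolding g_def by auto
  next
    fix C assume "C \<in> (\<lambda>i. principal_ideal_code (4 * p ^ s) (DN \<alpha> \<beta>)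
        ([:emb (\<gamma>\<^sup>2 / 2), emb \<gamma>, 1:] ^ i * [:emb (\<gamma>\<^sup>2 / 2), emb (- \<gamma>), 1:] ^ (2 * p ^ s - i)))
      ` {0..2 * p ^ s}"
    then obtain i where i: "i \<le> 2 * p ^ s" "C = principal_ideal_code (4 * p ^ s) (DN \<alpha> \<beta>) (g i)"
      unfolding g_def by auto
    then have CD: "C = D (F i)" using PICi by simp
    have "constacyclic_code (4 * p ^ s) (DN \<alpha> \<beta>) C" using D_constacyclic[OF FdH[OF i(1)]] CD by simp
    moreover have "isodual (4 * p ^ s) C"
      using isodual_D[OF evn F0 FdH[OF i(1)] negF[OF i(1)]] CD by simp
    ultimately show "C \<in> {C. constacyclic_code (4 * p ^ s) (DN \<alpha> \<beta>) C \<and> isodual (4 * p ^ s) C}" by simp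
  qed
qed


end
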